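(* Let $\Phi$ be a root system of rank $r$ and $0\le k\le r$. The $k$-step good root subsystems of $\Phi$ are exactly the closed root subsystems of $\Phi$ of rank $r-k$ that are maximal with respect to inclusion among all closed root subsystems of $\Phi$ of rank $r-k$.
   Context: Root systems are reduced and crystallographic. A root subsystem $\Psi\subseteq\Phi$ is closed if $\lambda,\mu\in\Psi$, $\lambda+\mu\in\Phi$ imply $\lambda+\mu\in\Psi$; $\operatorname{rk}\Psi=\dim\operatorname{Span}\Psi$. A good root subsystem of a root system $\Theta$ of rank $m$ is a closed root subsystem of rank $m-1$ maximal under inclusion among closed root subsystems of $\Theta$ of rank $m-1$. The $0$-step good root subsystem of $\Phi$ is $\Phi$ itself; for $k\ge1$, a $k$-step good root subsystem of $\Phi$ is a good root subsystem of some $(k-1)$-step good root subsystem of $\Phi$ (viewed as a root system in its own right). *)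

theory Defs
  imports "HOL-Analysis.Analysis"
begin

text \<open>Root systems in a finite-dimensional real inner product space (not required to span it;
  the rank is the dimension of the span).  Reduced and crystallographic.\<close>

definition refl_root :: "'a::euclidean_space \<Rightarrow> 'a \<Rightarrow> 'a" where
  "refl_root \<alpha> \<beta> = \<beta> - (2 * (\<beta> \<bullet> \<alpha>) / (\<alpha> \<bullet> \<alpha>)) *\<^sub>R \<alpha>"

definition root_system :: "'a::euclidean_space set \<Rightarrow> bool" where
  "root_system \<Phi> \<longleftrightarrow> finite \<Phi> \<and> 0 \<notin> \<Phi>
     \<and> (\<forall>\<alpha>\<in>\<Phi>. \<forall>\<beta>\<in>\<Phi>. refl_root \<alpha> \<beta> \<in> \<Phi>)
     \<and> (\<forall>\<alpha>\<in>\<Phi>. \<forall>\<beta>\<in>\<Phi>. 2 * (\<beta> \<bullet> \<alpha>) / (\<alpha> \<bullet> \<alpha>) \<in> \<int>)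
     \<and> (\<forall>\<alpha>\<in>\<Phi>. \<forall>c::real. c *\<^sub>R \<alpha> \<in> \<Phi> \<longrightarrow> c = 1 \<or> c = -1)"

definition rank_rs :: "'a::euclidean_space set \<Rightarrow> nat" where
  "rank_rs \<Phi> = dim (span \<Phi>)"

definition root_subsystem :: "'a::euclidean_space set \<Rightarrow> 'a set \<Rightarrow> bool" where
  "root_subsystem \<Phi> \<Psi> \<longleftrightarrow> \<Psi> \<subseteq> \<Phi> \<and> root_system \<Psi>"

definition closed_subsystem :: "'a::euclidean_space set \<Rightarrow> 'a set \<Rightarrow> bool" where
  "closed_subsystem \<Phi> \<Psi> \<longleftrightarrow> root_subsystem \<Phi> \<Psi>
     \<and> (\<forall>x\<in>\<Psi>. \<forall>y\<in>\<Psi>. x + y \<in> \<Phi> \<longrightarrow> x + y \<in> \<Psi>)"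

definition maximal_closed_of_rank :: "'a::euclidean_space set \<Rightarrow> nat \<Rightarrow> 'a set \<Rightarrow> bool" where
  "maximal_closed_of_rank \<Phi> d \<Psi> \<longleftrightarrow> closed_subsystem \<Phi> \<Psi> \<and> rank_rs \<Psi> = d
     \<and> (\<forall>\<Psi>'. closed_subsystem \<Phi> \<Psi>' \<and> rank_rs \<Psi>' = d \<and> \<Psi> \<subseteq> \<Psi>' \<longrightarrow> \<Psi>' = \<Psi>)"

definition good_subsystem :: "'a::euclidean_space set \<Rightarrow> 'a set \<Rightarrow> bool" where
  "good_subsystem \<Theta> \<Psi> \<longleftrightarrow> rank_rs \<Theta> \<ge> 1 \<and> maximal_closed_of_rank \<Theta> (rank_rs \<Theta> - 1) \<Psi>"

fun kstep_good :: "nat \<Rightarrow> 'a::euclidean_space set \<Rightarrow> 'a set \<Rightarrow> bool" where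
  "kstep_good 0 \<Phi> \<Psi> \<longleftrightarrow> \<Psi> = \<Phi>"
| "kstep_good (Suc k) \<Phi> \<Psi> \<longleftrightarrow> (\<exists>\<Theta>. kstep_good k \<Phi> \<Theta> \<and> good_subsystem \<Theta> \<Psi>)"

end

theory Submission
  imports Defs
begin

lemma rs_inter:
  assumes "root_system \<Theta>" "subspace V"
  shows "root_system (\<Theta> \<inter> V)"
  using assms unfolding root_system_def refl_root_def
  by (auto intro: subspace_diff subspace_scale)

lemma closed_inter:
  assumes "root_system \<Theta>" "subspace V"
  shows "closed_subsystem \<Theta> (\<Theta> \<inter> V)"
  using rs_inter[OF assms] assms(2)
  unfolding closed_subsystem_def root_subsystem_def
  by (auto intro: subspace_add)

lemma span_inter_span:
  assumes "\<Psi> \<subseteq> \<Theta>"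
  shows "span (\<Theta> \<inter> span \<Psi>) = span \<Psi>"
proof
  show "span (\<Theta> \<inter> span \<Psi>) \<subseteq> span \<Psi>"
    by (metis inf_le2 span_mono span_span)
  show "span \<Psi> \<subseteq> span (\<Theta> \<inter> span \<Psi>)"
    using assms by (intro span_mono) (auto intro: span_base)
qed

definition P :: "'a::euclidean_space set \<Rightarrow> nat \<Rightarrow> 'a set \<Rightarrow> bool" where
  "P \<Theta> d \<Psi> \<longleftrightarrow> \<Psi> \<subseteq> \<Theta> \<and> \<Theta> \<inter> span \<Psi> \<subseteq> \<Psi> \<and> rank_rs \<Psi> = d"

lemma char:
  assumes rs: "root_system \<Theta>"
  shows "maximal_closed_of_rank \<Theta> d \<Psi> \<longleftrightarrow> P \<Theta> d \<Psi>"
proof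
  assume m: "maximal_closed_of_rank \<Theta> d \<Psi>"
  then have sub: "\<Psi> \<subseteq> \<Theta>" and rk: "rank_rs \<Psi> = d"
    unfolding maximal_closed_of_rank_def closed_subsystem_def root_subsystem_def by auto
  have c: "closed_subsystem \<Theta> (\<Theta> \<inter> span \<Psi>)"
    by (rule closed_inter[OF rs subspace_span])
  have r2: "rank_rs (\<Theta> \<inter> span \<Psi>) = d"
    using rk span_inter_span[OF sub] unfolding rank_rs_def by simp
  have "\<Psi> \<subseteq> \<Theta> \<inter> span \<Psi>" using sub span_base by auto
  then have "\<Theta> \<inter> span \<Psi> = \<Psi>"
    using m c r2 unfolding maximal_closed_of_rank_def by blast
  then show "P \<Theta> d \<Psi>" using sub rk unfolding P_def by auto
next
  assume p: "P \<Theta> d \<Psi>"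
  then have sub: "\<Psi> \<subseteq> \<Theta>" and rk: "rank_rs \<Psi> = d" and eq: "\<Theta> \<inter> span \<Psi> = \<Psi>"
    unfolding P_def using span_base by auto
  have c: "closed_subsystem \<Theta> \<Psi>"
    using closed_inter[OF rs subspace_span, of \<Psi>] eq by simp
  have "\<Psi>' = \<Psi>" if "closed_subsystem \<Theta> \<Psi>'" "rank_rs \<Psi>' = d" "\<Psi> \<subseteq> \<Psi>'" for \<Psi>'
  proof -
    have s': "\<Psi>' \<subseteq> \<Theta>" using that(1) unfolding closed_subsystem_def root_subsystem_def by auto
    have "dim \<Psi>' \<le> dim \<Psi>" using that(2) rk unfolding rank_rs_def by (simp add: dim_span)
    then have "span \<Psi> = span \<Psi>'" using dim_eq_span[OF that(3)] by simp
    then have "\<Psi>' \<subseteq> \<Theta> \<inter> span \<Psi>" using s' span_base by auto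
    then show ?thesis using eq that(3) by auto
  qed
  then show "maximal_closed_of_rank \<Theta> d \<Psi>"
    using c rk unfolding maximal_closed_of_rank_def by blast
qed

lemma main_aux:
  fixes \<Phi> :: "'a::euclidean_space set"
  assumes rs: "root_system \<Phi>"
  shows "k \<le> rank_rs \<Phi> \<Longrightarrow> kstep_good k \<Phi> \<Psi> \<longleftrightarrow> P \<Phi> (rank_rs \<Phi> - k) \<Psi>"
proof (induction k arbitrary: \<Psi>)
  case 0
  show ?case
  proof
    assume "kstep_good 0 \<Phi> \<Psi>"
    then show "P \<Phi> (rank_rs \<Phi> - 0) \<Psi>" unfolding P_def using span_base by auto
  next
    assume p: "P \<Phi> (rank_rs \<Phi> - 0) \<Psi>"
    then have sub: "\<Psi> \<subseteq> \<Phi>" and eq: "\<Phi> \<inter> span \<Psi> \<subseteq> \<Psi>" and rk: "dim \<Psi> = dim \<Phi>"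
      unfolding P_def rank_rs_def by (auto simp: dim_span)
    have "span \<Psi> = span \<Phi>" using dim_eq_span[OF sub] rk by simp
    then have "\<Phi> \<subseteq> \<Psi>" using eq span_base by auto
    then show "kstep_good 0 \<Phi> \<Psi>" using sub by auto
  qed
next
  case (Suc k)
  define r where "r = rank_rs \<Phi>"
  have kr: "k < r" using Suc.prems r_def by simp
  have IH: "kstep_good k \<Phi> \<Theta> \<longleftrightarrow> P \<Phi> (r - k) \<Theta>" for \<Theta>
    using Suc.IH[of \<Theta>] Suc.prems r_def by simp
  have rsT: "root_system \<Theta>" if "P \<Phi> d \<Theta>" for \<Theta> d
  proof -
    have "\<Theta> = \<Phi> \<inter> span \<Theta>" using that span_base unfolding P_def by auto
    then show ?thesis using rs_inter[OF rs subspace_span, of \<Theta>] by simp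
  qed
  show ?case unfolding r_def[symmetric]
  proof
    assume "kstep_good (Suc k) \<Phi> \<Psi>"
    then obtain \<Theta> where t: "kstep_good k \<Phi> \<Theta>" and g: "good_subsystem \<Theta> \<Psi>" by auto
    have pt: "P \<Phi> (r - k) \<Theta>" using t IH by simp
    have pg: "P \<Theta> (rank_rs \<Theta> - 1) \<Psi>"
      using g char[OF rsT[OF pt]] unfolding good_subsystem_def by simp
    have rT: "rank_rs \<Theta> = r - k" using pt unfolding P_def by simp
    have s1: "\<Psi> \<subseteq> \<Theta>" and s2: "\<Theta> \<subseteq> \<Phi>" and e1: "\<Theta> \<inter> span \<Psi> \<subseteq> \<Psi>"
      and e2: "\<Phi> \<inter> span \<Theta> \<subseteq> \<Theta>" using pg pt unfolding P_def by auto
    have "span \<Psi> \<subseteq> span \<Theta>" using s1 span_mono by auto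
    then have "\<Phi> \<inter> span \<Psi> \<subseteq> \<Psi>" using e1 e2 by blast
    then show "P \<Phi> (r - Suc k) \<Psi>" using pg rT s1 s2 unfolding P_def by auto
  next
    assume p: "P \<Phi> (r - Suc k) \<Psi>"
    then have sub: "\<Psi> \<subseteq> \<Phi>" and eq: "\<Phi> \<inter> span \<Psi> \<subseteq> \<Psi>" and rk: "dim \<Psi> = r - Suc k"
      unfolding P_def rank_rs_def by (auto simp: dim_span)
    have "\<not> \<Phi> \<subseteq> span \<Psi>"
    proof
      assume "\<Phi> \<subseteq> span \<Psi>"
      then have "dim \<Phi> \<le> dim (span \<Psi>)" by (rule dim_subset)
      then show False using rk kr r_def unfolding rank_rs_def by (simp add: dim_span)
    qed
    then obtain \<alpha> where a: "\<alpha> \<in> \<Phi>" "\<alpha> \<notin> span \<Psi>" by auto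
    define \<Theta> where "\<Theta> = \<Phi> \<inter> span (insert \<alpha> \<Psi>)"
    have sT: "span \<Theta> = span (insert \<alpha> \<Psi>)"
      unfolding \<Theta>_def by (rule span_inter_span) (use a sub in auto)
    have dT: "rank_rs \<Theta> = r - k"
      using sT a(2) rk kr unfolding rank_rs_def by (simp add: dim_span dim_insert)
    have pT: "P \<Phi> (r - k) \<Theta>" unfolding P_def using dT sT unfolding \<Theta>_def by auto
    have sP: "span \<Psi> \<subseteq> span (insert \<alpha> \<Psi>)" by (rule span_mono) auto
    have "P \<Theta> (rank_rs \<Theta> - 1) \<Psi>"
      unfolding P_def using dT rk sub eq sP span_base[of _ "insert \<alpha> \<Psi>"]
      unfolding \<Theta>_def rank_rs_def by (auto simp: dim_span)
    then have "good_subsystem \<Theta> \<Psi>"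
      using char[OF rsT[OF pT]] dT kr unfolding good_subsystem_def by simp
    then show "kstep_good (Suc k) \<Phi> \<Psi>" using pT IH by auto
  qed
qed

theorem mainTheorem11:
  fixes \<Phi> \<Psi> :: "'a::euclidean_space set" and r k :: nat
  assumes "root_system \<Phi>" and "rank_rs \<Phi> = r" and "k \<le> r"
  shows "kstep_good k \<Phi> \<Psi> \<longleftrightarrow> maximal_closed_of_rank \<Phi> (r - k) \<Psi>"
  using main_aux[OF assms(1)] char[OF assms(1)] assms(2,3) by simp

end
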